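(* Let $k$ be a non-negative integer. Suppose that $\ell(n)\le 2kn+n-k^2-k$ for every positive integer $n$. Then for every positive integer $n$, every Latin square of order $n$ has a partial transversal of length $n-k$.
   Context: An array of order $n$ is an $n\times n$ array with a symbol in each cell; an entry is a triple $(i,j,A_{ij})$ where $A_{ij}$ is the symbol in cell $(i,j)$. A partial transversal of length $k$ is a set of $k$ entries, no two of which agree in any of their three coordinates (row, column, symbol). A transversal of an $n\times n$ array is a partial transversal of length $n$. An array is Latin if no symbol appears more than once in any row or any column; a Latin square of order $n$ is an $n\times n$ Latin array with exactly $n$ distinct symbols. For each positive integer $n$, $\ell(n)$ denotes the least positive integer such that $\ell(n)\ge n$ and every $n\times n$ Latin array with at least $\ell(n)$ distinct symbols contains a transversal. *)

theory Defs
  imports Main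
begin

text \<open>An array of order n: cells (i,j) with i,j < n; symbols are natural numbers
  (any symbol set can be relabelled injectively into nat).\<close>

definition symbols :: "nat \<Rightarrow> (nat \<Rightarrow> nat \<Rightarrow> nat) \<Rightarrow> nat set" where
  "symbols n A = {A i j | i j. i < n \<and> j < n}"

definition latin_array :: "nat \<Rightarrow> (nat \<Rightarrow> nat \<Rightarrow> nat) \<Rightarrow> bool" where
  "latin_array n A \<longleftrightarrow>
     (\<forall>i<n. inj_on (\<lambda>j. A i j) {..<n}) \<and> (\<forall>j<n. inj_on (\<lambda>i. A i j) {..<n})"

definition latin_square :: "nat \<Rightarrow> (nat \<Rightarrow> nat \<Rightarrow> nat) \<Rightarrow> bool" where
  "latin_square n A \<longleftrightarrow> latin_array n A \<and> card (symbols n A) = n"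

text \<open>A partial transversal of length k, given by its set of cells (the entry of a cell
  (i,j) is the triple (i,j,A i j)); no two entries agree in row, column or symbol.\<close>
definition partial_transversal ::
  "nat \<Rightarrow> (nat \<Rightarrow> nat \<Rightarrow> nat) \<Rightarrow> (nat \<times> nat) set \<Rightarrow> nat \<Rightarrow> bool" where
  "partial_transversal n A T k \<longleftrightarrow>
     T \<subseteq> {..<n} \<times> {..<n} \<and> card T = k \<and>
     inj_on fst T \<and> inj_on snd T \<and> inj_on (\<lambda>(i,j). A i j) T"

definition has_transversal :: "nat \<Rightarrow> (nat \<Rightarrow> nat \<Rightarrow> nat) \<Rightarrow> bool" where
  "has_transversal n A \<longleftrightarrow> (\<exists>T. partial_transversal n A T n)"

definition ell :: "nat \<Rightarrow> nat" where
  "ell n = (LEAST m. m > 0 \<and> m \<ge> n \<and>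
      (\<forall>A. latin_array n A \<and> card (symbols n A) \<ge> m \<longrightarrow> has_transversal n A))"

end

theory Submission
  imports Defs
begin

lemma symbols_eq: "symbols n A = (\<lambda>(i,j). A i j) ` ({..<n}\<times>{..<n})"
  unfolding symbols_def by auto

lemma symbols_card_le: "card (symbols n A) \<le> n*n"
proof -
  have "card (symbols n A) \<le> card ({..<n}\<times>{..<n})"
    unfolding symbols_eq by (rule card_image_le) simp
  thus ?thesis by simp
qed

lemma ell_prop:
  assumes "latin_array n A" "card (symbols n A) \<ge> ell n"
  shows "has_transversal n A"
proof -
  let ?P = "\<lambda>m. m > 0 \<and> m \<ge> n \<and>
      (\<forall>A. latin_array n A \<and> card (symbols n A) \<ge> m \<longrightarrow> has_transversal n A)"
  have "?P (n*n+1)"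
  proof (intro conjI allI impI)
    show "n \<le> n*n+1" by (cases n) auto
  next
    fix B assume "latin_array n B \<and> n * n + 1 \<le> card (symbols n B)"
    with symbols_card_le[of n B] show "has_transversal n B" by simp
  qed simp
  hence "?P (ell n)" unfolding ell_def by (rule LeastI)
  thus ?thesis using assms by blast
qed

theorem proposition1:
  fixes k :: nat
  assumes "\<forall>n::nat. n > 0 \<longrightarrow>
             int (ell n) \<le> 2 * int k * int n + int n - int k ^ 2 - int k"
  shows "\<forall>n::nat. n > 0 \<longrightarrow>
           (\<forall>A. latin_square n A \<longrightarrow> (\<exists>T. partial_transversal n A T (n - k)))"
proof (intro allI impI)
  fix n :: nat and A
  assume npos: "n > 0" and LS: "latin_square n A"
  define m where "m = n + k"
  define S where "S = Max (symbols n A)"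
  have finS: "finite (symbols n A)" unfolding symbols_eq by simp
  have leS: "\<And>i j. i < n \<Longrightarrow> j < n \<Longrightarrow> A i j \<le> S"
    unfolding S_def using finS by (intro Max_ge) (auto simp: symbols_def)
  define f where "f = (\<lambda>(i::nat,j::nat). S + 1 + i*m + j)"
  define B where "B = (\<lambda>i j. if i < n \<and> j < n then A i j else f (i,j))"
  have finj: "inj_on f (UNIV \<times> {..<m})"
  proof (rule inj_onI)
    fix p q assume "p \<in> UNIV \<times> {..<m}" "q \<in> UNIV \<times> {..<m}" "f p = f q"
    then obtain a b c d where pq: "p = (a,b)" "q = (c,d)" "b < m" "d < m" "a*m+b = c*m+d"
      by (auto simp: f_def)
    hence e1: "(a*m+b) div m = (c*m+d) div m" and e2: "(a*m+b) mod m = (c*m+d) mod m" by auto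
    have d1: "(a*m+b) div m = a" "(c*m+d) div m = c" "(a*m+b) mod m = b" "(c*m+d) mod m = d"
      using pq(3,4) by auto
    have "a = c" using e1 d1(1,2) by argo
    moreover have "b = d" using e2 d1(3,4) by argo
    ultimately show "p = q" using pq(1,2) by simp
  qed
  have fbig: "\<And>p. f p > S" by (auto simp: f_def)
  have LA: "latin_array n A" using LS unfolding latin_square_def by simp
  have latB: "latin_array m B"
    unfolding latin_array_def
  proof (intro conjI allI impI)
    fix i assume "i < m"
    show "inj_on (\<lambda>j. B i j) {..<m}"
    proof (rule inj_onI)
      fix j j' assume j: "j \<in> {..<m}" "j' \<in> {..<m}" and e: "B i j = B i j'"
      show "j = j'"
      proof (cases "i < n \<and> j < n"; cases "i < n \<and> j' < n")
        assume a: "i < n \<and> j < n" "i < n \<and> j' < n"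
        with e have "A i j = A i j'" by (simp add: B_def)
        moreover have "inj_on (\<lambda>j. A i j) {..<n}" using LA a unfolding latin_array_def by blast
        ultimately show ?thesis using a by (auto dest: inj_onD)
      next
        assume a: "i < n \<and> j < n" "\<not>(i < n \<and> j' < n)"
        with e have "A i j = f (i,j')" by (simp add: B_def)
        with leS[of i j] fbig[of "(i,j')"] a show ?thesis by simp
      next
        assume a: "\<not>(i < n \<and> j < n)" "i < n \<and> j' < n"
        with e have "A i j' = f (i,j)" by (simp add: B_def)
        with leS[of i j'] fbig[of "(i,j)"] a show ?thesis by simp
      next
        assume a: "\<not>(i < n \<and> j < n)" "\<not>(i < n \<and> j' < n)"
        with e have "f (i,j) = f (i,j')" by (simp add: B_def)
        hence "(i,j) = (i,j')" using finj j by (auto dest: inj_onD)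
        thus ?thesis by simp
      qed
    qed
  next
    fix j assume "j < m"
    show "inj_on (\<lambda>i. B i j) {..<m}"
    proof (rule inj_onI)
      fix i i' assume ii: "i \<in> {..<m}" "i' \<in> {..<m}" and e: "B i j = B i' j"
      show "i = i'"
      proof (cases "i < n \<and> j < n"; cases "i' < n \<and> j < n")
        assume a: "i < n \<and> j < n" "i' < n \<and> j < n"
        with e have "A i j = A i' j" by (simp add: B_def)
        moreover have "inj_on (\<lambda>i. A i j) {..<n}" using LA a unfolding latin_array_def by blast
        ultimately show ?thesis using a by (auto dest: inj_onD)
      next
        assume a: "i < n \<and> j < n" "\<not>(i' < n \<and> j < n)"
        with e have "A i j = f (i',j)" by (simp add: B_def)
        with leS[of i j] fbig[of "(i',j)"] a show ?thesis by simp
      next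
        assume a: "\<not>(i < n \<and> j < n)" "i' < n \<and> j < n"
        with e have "A i' j = f (i,j)" by (simp add: B_def)
        with leS[of i' j] fbig[of "(i,j)"] a show ?thesis by simp
      next
        assume a: "\<not>(i < n \<and> j < n)" "\<not>(i' < n \<and> j < n)"
        with e have "f (i,j) = f (i',j)" by (simp add: B_def)
        hence "(i,j) = (i',j)" using finj \<open>j < m\<close> ii by (auto dest: inj_onD)
        thus ?thesis by simp
      qed
    qed
  qed
  define D where "D = {..<m}\<times>{..<m} - {..<n}\<times>{..<n}"
  have sub: "symbols n A \<union> f ` D \<subseteq> symbols m B"
  proof
    fix x assume "x \<in> symbols n A \<union> f ` D"
    thus "x \<in> symbols m B"
    proof
      assume "x \<in> symbols n A"
      then obtain i j where ij: "i < n" "j < n" "x = A i j" by (auto simp: symbols_def)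
      hence "x = B i j" "i < m" "j < m" by (auto simp: B_def m_def)
      thus ?thesis unfolding symbols_def by blast
    next
      assume "x \<in> f ` D"
      then obtain i j where ij: "i < m" "j < m" "\<not>(i < n \<and> j < n)" "x = f (i,j)"
        by (auto simp: D_def)
      hence "x = B i j" by (auto simp: B_def)
      thus ?thesis unfolding symbols_def using ij by blast
    qed
  qed
  have finB: "finite (symbols m B)" unfolding symbols_eq by simp
  have disj: "symbols n A \<inter> f ` D = {}"
  proof (rule ccontr)
    assume "symbols n A \<inter> f ` D \<noteq> {}"
    then obtain x p where "x \<in> symbols n A" "x = f p" by blast
    then obtain i j where "i < n" "j < n" "f p = A i j" by (auto simp: symbols_def)
    with leS[of i j] fbig[of p] show False by simp
  qed
  have injD: "inj_on f D" using finj by (rule inj_on_subset) (auto simp: D_def)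
  have cardD: "card D = m*m - n*n"
  proof -
    have "{..<n}\<times>{..<n} \<subseteq> {..<m}\<times>{..<m}" by (auto simp: m_def)
    hence "card D = card ({..<m}\<times>{..<m}) - card ({..<n}\<times>{..<n}::(nat\<times>nat) set)"
      unfolding D_def by (intro card_Diff_subset) auto
    thus ?thesis by (simp add: card_cartesian_product)
  qed
  have "card (symbols n A \<union> f ` D) = n + (m*m - n*n)"
  proof -
    have finD: "finite D" unfolding D_def by simp
    have "card (symbols n A \<union> f ` D) = card (symbols n A) + card (f ` D)"
      using disj finS finD by (intro card_Un_disjoint) auto
    moreover have "card (f ` D) = card D" using injD by (rule card_image)
    moreover have "card (symbols n A) = n" using LS unfolding latin_square_def by simp
    ultimately show ?thesis using cardD by simp
  qed
  hence cB: "card (symbols m B) \<ge> n + (m*m - n*n)"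
    using card_mono[OF finB sub] by simp
  have mm: "m*m - n*n = 2*k*n + k*k"
  proof -
    have "m*m = n*n + (2*k*n + k*k)" unfolding m_def by (simp add: algebra_simps)
    thus ?thesis by simp
  qed
  have "int (ell m) \<le> 2 * int k * int m + int m - int k ^ 2 - int k"
    using assms npos unfolding m_def by (metis add_gr_0 of_nat_add)
  also have "\<dots> = int (n + (2*k*n + k*k))" unfolding m_def by (simp add: algebra_simps power2_eq_square)
  finally have "int (ell m) \<le> int (n + (2*k*n + k*k))" .
  hence "ell m \<le> n + (2*k*n + k*k)" by (simp only: of_nat_le_iff)
  hence "ell m \<le> card (symbols m B)" using cB mm by linarith
  then have "has_transversal m B" using ell_prop latB by blast
  then obtain T where T: "partial_transversal m B T m" unfolding has_transversal_def by blast
  define T' where "T' = T \<inter> ({..<n}\<times>{..<n})"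
  have TT: "T \<subseteq> {..<m}\<times>{..<m}" "card T = m" "inj_on fst T" "inj_on snd T"
    "inj_on (\<lambda>(i,j). B i j) T"
    using T unfolding partial_transversal_def by auto
  have finT: "finite T" using TT(1) finite_subset by blast
  define R where "R = {p\<in>T. fst p \<ge> n}"
  define C where "C = {p\<in>T. snd p \<ge> n}"
  have cR: "card R \<le> k"
  proof -
    have "card R = card (fst ` R)"
      using TT(3) by (intro card_image[symmetric]) (auto simp: R_def intro: inj_on_subset)
    also have "\<dots> \<le> card {n..<m}"
      using TT(1) by (intro card_mono) (auto simp: R_def)
    finally show ?thesis by (simp add: m_def)
  qed
  have cC: "card C \<le> k"
  proof -
    have "card C = card (snd ` C)"
      using TT(4) by (intro card_image[symmetric]) (auto simp: C_def intro: inj_on_subset)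
    also have "\<dots> \<le> card {n..<m}"
      using TT(1) by (intro card_mono) (auto simp: C_def)
    finally show ?thesis by (simp add: m_def)
  qed
  have "T \<subseteq> T' \<union> R \<union> C" by (auto simp: T'_def R_def C_def)
  hence "card T \<le> card (T' \<union> R \<union> C)" using finT
    by (intro card_mono) (auto simp: T'_def R_def C_def)
  also have "\<dots> \<le> card T' + card R + card C"
    by (metis add_le_mono card_Un_le dual_order.trans le_refl)
  finally have "n - k \<le> card T'" using TT(2) cR cC m_def by simp
  then obtain T'' where T'': "T'' \<subseteq> T'" "card T'' = n - k"
    using obtain_subset_with_card_n by metis
  have sub2: "T'' \<subseteq> T" "T'' \<subseteq> {..<n}\<times>{..<n}" using T'' by (auto simp: T'_def)
  have "inj_on (\<lambda>(i,j). B i j) T''" using TT(5) sub2(1) by (rule inj_on_subset)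
  moreover have "\<And>p. p \<in> T'' \<Longrightarrow> (\<lambda>(i,j). B i j) p = (\<lambda>(i,j). A i j) p"
    using sub2(2) by (auto simp: B_def)
  ultimately have "inj_on (\<lambda>(i,j). A i j) T''" using inj_on_cong by metis
  hence "partial_transversal n A T'' (n - k)"
    unfolding partial_transversal_def
    using sub2 T''(2) TT(3,4) inj_on_subset by blast
  thus "\<exists>T. partial_transversal n A T (n - k)" by blast
qed

end
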